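(* Let $I=\langle N,M,V\rangle$ be an ordered instance of goods, let $k>0$ be an integer and let $S\subset M$ be a set of $k-1$ goods. Suppose that for each agent $i\in N$, $B_i$ is a bundle in some MMS partition of $i$ with $|B_i|=k$ and $S\subset B_i$. Then there is an agent $i'\in N$ such that allocating $B_{i'}$ to $i'$ is a valid reduction.
   Context: An instance $I=\langle N,M,V\rangle$ has agents $N=\{1,\dots,n\}$, goods $M=\{1,\dots,m\}$ and additive valuations $v_i$ with $v_i(\emptyset)=0$, $v_i(S)=\sum_{g\in S}v_i(\{g\})$, $v_{ij}:=v_i(\{j\})\ge 0$. It is ordered if $v_{ij}\ge v_{i(j+1)}$ for all $i$ and $1\le j<m$. An allocation ($n$-partition) is an ordered $n$-tuple of pairwise disjoint, possibly empty subsets of $M$ with union $M$. The maximin share of $i$ in $I$ is $\mu_i^I=\max_A\min_j v_i(A_j)$ over all allocations; an MMS partition of $i$ is an allocation $A$ with $v_i(A_j)\ge\mu_i^I$ for all $j$. Removing agents $N'\subseteq N$ and items $M'\subseteq M$ is a valid reduction if the items of $M'$ can be allocated to the agents of $N'$ so that each $i'\in N'$ receives a bundle $B_{i'}$ with $v_{i'}(B_{i'})\ge\mu_{i'}^I$, and every $i\in N\setminus N'$ satisfies $\mu_i^{I'}\ge\mu_i^I$, where $I'=\langle N\setminus N', M\setminus M', V\rangle$ (valuations restricted, maximin share computed with $|N\setminus N'|$ bundles). "Allocating $B$ to $i$ is a valid reduction" means this holds with $N'=\{i\}$, $M'=B$. *)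

theory Defs
  imports Complex_Main
begin

text \<open>Agents are 1..n, goods are 1..m, valuation v i j of agent i for good j.
  Additive valuation of a bundle.\<close>

definition val :: "(nat \<Rightarrow> nat \<Rightarrow> real) \<Rightarrow> nat \<Rightarrow> nat set \<Rightarrow> real" where
  "val v i S = (\<Sum>j\<in>S. v i j)"

text \<open>Allocations (k-partitions) of the item set G: ordered k-tuples of pairwise
  disjoint, possibly empty subsets of G with union G; bundles indexed by 0..k-1.\<close>

definition partitions :: "nat \<Rightarrow> nat set \<Rightarrow> (nat \<Rightarrow> nat set) set" where
  "partitions k G = {A. (\<forall>j<k. A j \<subseteq> G)
      \<and> (\<forall>j<k. \<forall>j'<k. j \<noteq> j' \<longrightarrow> A j \<inter> A j' = {})
      \<and> (\<Union>j<k. A j) = G}"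

definition mms :: "(nat \<Rightarrow> nat \<Rightarrow> real) \<Rightarrow> nat \<Rightarrow> nat \<Rightarrow> nat set \<Rightarrow> real" where
  "mms v i k G = Max ((\<lambda>A. Min ((\<lambda>j. val v i (A j)) ` {..<k})) ` partitions k G)"

definition mms_partition :: "nat \<Rightarrow> nat \<Rightarrow> (nat \<Rightarrow> nat \<Rightarrow> real) \<Rightarrow> nat \<Rightarrow> (nat \<Rightarrow> nat set) \<Rightarrow> bool" where
  "mms_partition n m v i A \<longleftrightarrow> A \<in> partitions n {1..m}
      \<and> (\<forall>j<n. val v i (A j) \<ge> mms v i n {1..m})"

definition ordered_instance :: "nat \<Rightarrow> nat \<Rightarrow> (nat \<Rightarrow> nat \<Rightarrow> real) \<Rightarrow> bool" where
  "ordered_instance n m v \<longleftrightarrow>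
     (\<forall>i\<in>{1..n}. \<forall>j\<in>{1..m}. v i j \<ge> 0)
   \<and> (\<forall>i\<in>{1..n}. \<forall>j. 1 \<le> j \<and> j < m \<longrightarrow> v i j \<ge> v i (j + 1))"

definition valid_reduction :: "nat \<Rightarrow> nat \<Rightarrow> (nat \<Rightarrow> nat \<Rightarrow> real) \<Rightarrow> nat set \<Rightarrow> nat set \<Rightarrow> bool" where
  "valid_reduction n m v N' M' \<longleftrightarrow>
     (\<exists>B. (\<forall>i\<in>N'. B i \<subseteq> M')
        \<and> (\<forall>i\<in>N'. \<forall>i'\<in>N'. i \<noteq> i' \<longrightarrow> B i \<inter> B i' = {})
        \<and> (\<Union>i\<in>N'. B i) = M'
        \<and> (\<forall>i\<in>N'. val v i (B i) \<ge> mms v i n {1..m}))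
   \<and> (\<forall>i\<in>{1..n} - N'. mms v i (n - card N') ({1..m} - M') \<ge> mms v i n {1..m})"

end

theory Submission
  imports Defs "HOL-Library.FuncSet"
begin

lemma mono_val:
  assumes "ordered_instance n m v" "i \<in> {1..n}" "1 \<le> a" "a \<le> b" "b \<le> m"
  shows "v i b \<le> v i a"
  using assms(4,5)
proof (induction b rule: dec_induct)
  case base then show ?case by simp
next
  case (step b)
  have "\<forall>j. 1 \<le> j \<and> j < m \<longrightarrow> v i j \<ge> v i (j + 1)"
    using assms(1,2) unfolding ordered_instance_def by blast
  moreover have "1 \<le> b" "b < m" using step assms(3) by auto
  ultimately have "v i (b+1) \<le> v i b" by blast
  moreover have "v i b \<le> v i a" using step.IH \<open>b < m\<close> by linarith
  ultimately show ?case by (simp only: Suc_eq_plus1)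
qed

lemma mms_ge:
  assumes "finite G" "k \<ge> 1" "A \<in> partitions k G" "\<forall>j<k. val v i (A j) \<ge> \<mu>"
  shows "mms v i k G \<ge> \<mu>"
proof -
  let ?f = "\<lambda>A. Min ((\<lambda>j. val v i (A j)) ` {..<k})"
  have sub: "?f ` partitions k G \<subseteq> ?f ` (PiE {..<k} (\<lambda>_. Pow G))"
  proof
    fix x assume "x \<in> ?f ` partitions k G"
    then obtain A where A: "A \<in> partitions k G" "x = ?f A" by auto
    have R: "restrict A {..<k} \<in> PiE {..<k} (\<lambda>_. Pow G)" proof -
      have "\<forall>j<k. A j \<subseteq> G" using A(1) unfolding partitions_def by blast
      then show ?thesis by (subst restrict_PiE_iff) auto
    qed
    have "(\<lambda>j. val v i (restrict A {..<k} j)) ` {..<k} = (\<lambda>j. val v i (A j)) ` {..<k}"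
      by (rule image_cong) simp_all
    then have E: "?f (restrict A {..<k}) = ?f A" by (simp only:)
    show "x \<in> ?f ` (PiE {..<k} (\<lambda>_. Pow G))"
    proof (rule image_eqI[where x="restrict A {..<k}"])
      show "x = ?f (restrict A {..<k})" using A(2) E by (simp only:)
    qed (rule R)
  qed
  have fin: "finite (?f ` partitions k G)"
  proof (rule finite_subset[OF sub], rule finite_imageI)
    show "finite (PiE {..<k} (\<lambda>_. Pow G))" by (rule finite_PiE) (simp_all add: assms(1))
  qed
  have "\<mu> \<le> ?f A" using assms(2,4) by (subst Min_ge_iff) (auto simp: lessThan_empty_iff)
  also have "\<dots> \<le> mms v i k G" unfolding mms_def using fin assms(3) by (intro Max_ge) auto
  finally show ?thesis .
qed

lemma reduce:
  assumes P: "A \<in> partitions n M" and j0: "j0 < n" "A j0 = insert g S"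
    and "g \<notin> S" "g' \<notin> S" "g' \<in> M" "n \<ge> 2" "v i g' \<le> v i g"
    and vals: "\<forall>j<n. val v i (A j) \<ge> \<mu>" and fin: "finite M"
  shows "mms v i (n-1) (M - insert g' S) \<ge> \<mu>"
proof -
  define \<tau> where "\<tau> j = (if j = j0 then n-1 else j)" for j
  define sw where "sw X = (if g' \<in> X then insert g (X - {g'}) else X)" for X
  define A' where "A' j = sw (A (\<tau> j))" for j
  have sub: "\<forall>j<n. A j \<subseteq> M" and dis: "\<forall>j<n. \<forall>j'<n. j \<noteq> j' \<longrightarrow> A j \<inter> A j' = {}"
    and un: "(\<Union>j<n. A j) = M" using P unfolding partitions_def by auto
  have gM: "g \<in> M" using sub j0 by auto
  have tau: "\<tau> j < n" "\<tau> j \<noteq> j0" if "j < n-1" for j using that j0 by (auto simp: \<tau>_def)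
  have tauinj: "\<tau> j \<noteq> \<tau> j'" if "j < n-1" "j' < n-1" "j \<noteq> j'" for j j'
    using that j0 by (auto simp: \<tau>_def)
  have tausurj: "\<exists>j<n-1. \<tau> j = j1" if "j1 < n" "j1 \<noteq> j0" for j1
  proof (cases "j1 = n-1")
    case True then show ?thesis using that j0 by (intro exI[of _ j0]) (auto simp: \<tau>_def)
  next
    case False then show ?thesis using that j0 by (intro exI[of _ j1]) (auto simp: \<tau>_def)
  qed
  have disj0: "A j \<inter> insert g S = {}" if "j < n" "j \<noteq> j0" for j
    using dis that j0 by metis
  have A'sub: "A' j \<subseteq> M - insert g' S" if "j < n-1" for j
  proof -
    have "A (\<tau> j) \<subseteq> M" "A (\<tau> j) \<inter> insert g S = {}" using sub disj0 tau[OF that] by auto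
    then show ?thesis unfolding A'_def sw_def using gM assms(4) by auto
  qed
  have A'dis: "A' j \<inter> A' j' = {}" if "j < n-1" "j' < n-1" "j \<noteq> j'" for j j'
  proof -
    have "A (\<tau> j) \<inter> A (\<tau> j') = {}" using dis tau that tauinj by metis
    moreover have "A (\<tau> j) \<inter> insert g S = {}" "A (\<tau> j') \<inter> insert g S = {}"
      using disj0 tau that by auto
    ultimately show ?thesis unfolding A'_def sw_def by auto
  qed
  have A'un: "(\<Union>j<n-1. A' j) = M - insert g' S"
  proof
    show "(\<Union>j<n-1. A' j) \<subseteq> M - insert g' S" using A'sub by auto
  next
    show "M - insert g' S \<subseteq> (\<Union>j<n-1. A' j)"
    proof
      fix x assume x: "x \<in> M - insert g' S"
      show "x \<in> (\<Union>j<n-1. A' j)"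
      proof (cases "x = g")
        case True
        have "g' \<notin> A j0" using j0 x True assms(5) by auto
        then obtain j1 where j1: "j1 < n" "g' \<in> A j1" "j1 \<noteq> j0" using un assms(6) by auto
        then obtain j where "j < n-1" "\<tau> j = j1" using tausurj by blast
        then show ?thesis using j1 True unfolding A'_def sw_def by auto
      next
        case False
        then have "x \<notin> A j0" using j0 x by auto
        then obtain j1 where j1: "j1 < n" "x \<in> A j1" "j1 \<noteq> j0" using un x by auto
        then obtain j where "j < n-1" "\<tau> j = j1" using tausurj by blast
        then show ?thesis using j1 x unfolding A'_def sw_def by auto
      qed
    qed
  qed
  have A'P: "A' \<in> partitions (n-1) (M - insert g' S)"
    unfolding partitions_def using A'sub A'dis A'un by auto
  have A'val: "val v i (A' j) \<ge> \<mu>" if "j < n-1" for j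
  proof -
    let ?X = "A (\<tau> j)"
    have X: "finite ?X" "?X \<inter> insert g S = {}" "?X \<subseteq> M"
      using sub disj0 tau[OF that] fin by (auto intro: finite_subset)
    have "val v i ?X \<le> val v i (sw ?X)"
    proof (cases "g' \<in> ?X")
      case True
      then have "val v i (sw ?X) = v i g + (val v i ?X - v i g')"
        using X unfolding sw_def val_def by (simp add: sum_diff1)
      then show ?thesis using assms(8) by simp
    qed (simp add: sw_def)
    then show ?thesis using vals tau[OF that] unfolding A'_def by force
  qed
  show ?thesis
    by (rule mms_ge[OF _ _ A'P]) (use fin assms(7) A'val in auto)
qed

theorem lemma12:
  fixes n m k :: nat and v :: "nat \<Rightarrow> nat \<Rightarrow> real"
    and S :: "nat set" and B :: "nat \<Rightarrow> nat set"
  assumes "n \<ge> 1"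
    and "ordered_instance n m v"
    and "k > 0"
    and "S \<subseteq> {1..m}" and "card S = k - 1"
    and "\<forall>i\<in>{1..n}. (\<exists>A. mms_partition n m v i A \<and> (\<exists>j<n. A j = B i))
                     \<and> card (B i) = k \<and> S \<subset> B i"
  shows "\<exists>i'\<in>{1..n}. valid_reduction n m v {i'} (B i')"
proof -
  have Bsub: "B i \<subseteq> {1..m}" if "i \<in> {1..n}" for i
  proof -
    have "\<exists>A. mms_partition n m v i A \<and> (\<exists>j<n. A j = B i)" using assms(6) that by blast
    then obtain A j where "mms_partition n m v i A" "j < n" "A j = B i" by blast
    then show ?thesis unfolding mms_partition_def partitions_def by auto
  qed
  define g where "g i = the_elem (B i - S)" for i
  have Bg: "B i = insert (g i) S \<and> g i \<notin> S \<and> g i \<in> {1..m}" if "i \<in> {1..n}" for i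
  proof -
    have fB: "finite (B i)" using Bsub[OF that] finite_subset by blast
    have ss: "S \<subset> B i" "card (B i) = k" using assms(6) that by auto
    have "card (B i - S) = 1" proof -
      have "S \<subseteq> B i" "finite S" using ss fB finite_subset by auto
      then have "card (B i - S) = card (B i) - card S" using card_Diff_subset by blast
      then show ?thesis using ss assms(3,5) by simp
    qed
    then obtain x where x: "B i - S = {x}" using card_1_singletonE by blast
    then have "g i = x" by (simp add: g_def)
    then show ?thesis using x ss Bsub[OF that] by auto
  qed
  define G where "G = Max (g ` {1..n})"
  have "G \<in> g ` {1..n}" unfolding G_def using assms(1) by (intro Max_in) auto
  then obtain i' where i': "i' \<in> {1..n}" "g i' = G" by auto
  have maxg: "g i \<le> g i'" if "i \<in> {1..n}" for i using that i' unfolding G_def by auto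
  have "valid_reduction n m v {i'} (B i')"
    unfolding valid_reduction_def
  proof (intro conjI)
    obtain A j where A: "mms_partition n m v i' A" "j < n" "A j = B i'" using assms(6) i' by blast
    then have "val v i' (B i') \<ge> mms v i' n {1..m}" unfolding mms_partition_def by auto
    then show "\<exists>B'. (\<forall>i\<in>{i'}. B' i \<subseteq> B i') \<and> (\<forall>i\<in>{i'}. \<forall>i''\<in>{i'}. i \<noteq> i'' \<longrightarrow> B' i \<inter> B' i'' = {})
        \<and> (\<Union>i\<in>{i'}. B' i) = B i' \<and> (\<forall>i\<in>{i'}. val v i (B' i) \<ge> mms v i n {1..m})"
      by (intro exI[of _ "\<lambda>_. B i'"]) auto
  next
    show "\<forall>i\<in>{1..n} - {i'}. mms v i n {1..m} \<le> mms v i (n - card {i'}) ({1..m} - B i')"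
    proof
      fix i assume i: "i \<in> {1..n} - {i'}"
      then have n2: "n \<ge> 2" using i' by auto
      have iN: "i \<in> {1..n}" using i by blast
      obtain A j where A: "mms_partition n m v i A" "j < n" "A j = B i" using assms(6) iN by blast
      have "v i (g i') \<le> v i (g i)"
        using mono_val[OF assms(2), of i "g i" "g i'"] maxg[of i] i Bg[of i] Bg[OF i'(1)] by auto
      moreover have "A \<in> partitions n {1..m}" "\<forall>j<n. val v i (A j) \<ge> mms v i n {1..m}"
        using A(1) unfolding mms_partition_def by auto
      moreover have "A j = insert (g i) S" "g i \<notin> S" using A(3) Bg[OF iN] by auto
      moreover have "g i' \<notin> S" "g i' \<in> {1..m}" "B i' = insert (g i') S" using Bg[OF i'(1)] by auto
      ultimately show "mms v i n {1..m} \<le> mms v i (n - card {i'}) ({1..m} - B i')"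
        using reduce[of A n "{1..m}" j "g i" S "g i'" v i "mms v i n {1..m}"] A(2) n2 by simp
    qed
  qed
  then show ?thesis using i' by blast
qed

end
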